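(* There exists a function $I(y,y')$, smooth on $\{(y,y'):0<y'<y\}$, such that $$G_{L}(y,y')=\mathbf{1}_{(0,\infty)}(y-y')\frac{Q(y)}{Q(y')}I(y,y'),\qquad G_{iL}(y,y')=\mathbf{1}_{(0,\infty)}(y-y')\frac{Q(y)}{Q(y')}$$ are the outgoing Green's functions of $L_Q$ and of $i^{-1}L_Qi$ respectively (acting on real-valued functions), i.e. $L_Q(G_L(\cdot,y'))=\delta_{y'}$, $i^{-1}L_Qi(G_{iL}(\cdot,y'))=\delta_{y'}$, and both vanish for $0<y<y'$; and $I$ has the following properties. (1) For every integer $k\ge0$ and $0<y'<y$: $|I(y,y')|\lesssim 1+\langle y'\rangle^{-2}\log\big(2+\frac{\langle y\rangle}{\langle y'\rangle}\big)$; $|y\partial_yI(y,y')|\lesssim \frac{y-y'}{y}\min\{\frac{y^2}{\langle y\rangle^2},\langle y'\rangle^{-2}\}$; for $k\ge2$, $|(y\partial_y)^kI(y,y')|\lesssim_k\frac{y^2}{1+y^4}\big(1+\langle y'\rangle^{-2}\log\big(2+\frac{\langle y\rangle}{\langle y'\rangle}\big)\big)$. (2) $\lim_{y-y'\to0^+}I(y,y')=1$ and $\lim_{y-y'\to0^+}y\partial_yI(y,y')=0$. Moreover, setting $I^{(k)}(y)=\lim_{y'\to y^-}(y\partial_y)^kI(y,y')$, for all $k\ge2$ and $\ell\ge0$ one has $|I^{(k)}(y)|_\ell\lesssim_{k,\ell}\frac{y^2}{1+y^4}$.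
   Context: $Q(y)=\frac{\sqrt8}{1+y^2}$, $A_\theta[Q](y)=-\frac{2y^2}{1+y^2}$, $\langle a\rangle=(1+a^2)^{1/2}$. For real-valued $u$ on $(0,\infty)$: $L_Qu=\partial_yu-\frac{A_\theta[Q]}{y}u+\frac{Q}{y}\int_0^yQu\,y'dy'$ and $i^{-1}L_Q(iu)=\partial_yu-\frac{A_\theta[Q]}{y}u$. The outgoing Green's function of a linear operator $T$ acting on real functions of $y\in(0,\infty)$ is $G(y,y')$ with $T(G(\cdot,y'))=\delta_{y'}$ and $G(y,y')=0$ for $0<y<y'$. For a function $f$ and integer $\ell\ge0$, $|f|_\ell(y)=\sup_{0\le j\le\ell}|y^j\partial_y^jf(y)|$. *)

theory Defs
  imports "HOL-Analysis.Analysis"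
begin

definition Q :: "real \<Rightarrow> real" where
  "Q y = sqrt 8 / (1 + y\<^sup>2)"

definition A_theta :: "real \<Rightarrow> real" where
  "A_theta y = - (2 * y\<^sup>2) / (1 + y\<^sup>2)"

(* Japanese bracket  <a> = (1+a^2)^(1/2) *)
definition jbr :: "real \<Rightarrow> real" where
  "jbr a = sqrt (1 + a\<^sup>2)"

fun higher_diff_on :: "nat \<Rightarrow> 'a::real_normed_vector set \<Rightarrow> ('a \<Rightarrow> 'b::real_normed_vector) \<Rightarrow> bool" where
  "higher_diff_on 0 S f \<longleftrightarrow> continuous_on S f"
| "higher_diff_on (Suc n) S f \<longleftrightarrow>
     (\<forall>x\<in>S. f differentiable (at x)) \<and>
     (\<forall>v. higher_diff_on n S (\<lambda>x. frechet_derivative f (at x) v))"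

definition smooth_on :: "'a::real_normed_vector set \<Rightarrow> ('a \<Rightarrow> 'b::real_normed_vector) \<Rightarrow> bool" where
  "smooth_on S f \<longleftrightarrow> (\<forall>n. higher_diff_on n S f)"

definition test_function :: "(real \<Rightarrow> real) \<Rightarrow> bool" where
  "test_function \<phi> \<longleftrightarrow> smooth_on UNIV \<phi> \<and>
     (\<exists>a b. 0 < a \<and> a \<le> b \<and> (\<forall>y. y \<notin> {a..b} \<longrightarrow> \<phi> y = 0))"

definition loc_int :: "(real \<Rightarrow> real) \<Rightarrow> bool" where
  "loc_int u \<longleftrightarrow> (\<forall>a b. 0 < a \<longrightarrow> set_integrable lborel {a..b} u)"

(* <L_Q u, \<phi>> for the distribution L_Q u, where
   L_Q u = \<partial>_y u - (A_\<theta>[Q]/y) u + (Q/y) \<integral>_0^y Q u y' dy' *)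
definition LQ_pair :: "(real \<Rightarrow> real) \<Rightarrow> (real \<Rightarrow> real) \<Rightarrow> real" where
  "LQ_pair u \<phi> =
     (LINT y:{0<..}|lborel.
        u y * (- deriv \<phi> y) - A_theta y / y * u y * \<phi> y
        + Q y / y * \<phi> y * (LINT s:{0<..y}|lborel. Q s * u s * s))"

(* <i^{-1} L_Q (i u), \<phi>> where i^{-1} L_Q (i u) = \<partial>_y u - (A_\<theta>[Q]/y) u *)
definition iLQi_pair :: "(real \<Rightarrow> real) \<Rightarrow> (real \<Rightarrow> real) \<Rightarrow> real" where
  "iLQi_pair u \<phi> =
     (LINT y:{0<..}|lborel. u y * (- deriv \<phi> y) - A_theta y / y * u y * \<phi> y)"

definition outgoing_green :: "((real \<Rightarrow> real) \<Rightarrow> (real \<Rightarrow> real) \<Rightarrow> real) \<Rightarrow> (real \<Rightarrow> real \<Rightarrow> real) \<Rightarrow> bool" where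
  "outgoing_green T G \<longleftrightarrow>
     (\<forall>y'>0. (\<forall>y. 0 < y \<and> y < y' \<longrightarrow> G y y' = 0) \<and>
             loc_int (\<lambda>y. G y y') \<and>
             (\<forall>\<phi>. test_function \<phi> \<longrightarrow> T (\<lambda>y. G y y') \<phi> = \<phi> y'))"

definition ydy :: "(real \<Rightarrow> real \<Rightarrow> real) \<Rightarrow> real \<Rightarrow> real \<Rightarrow> real" where
  "ydy F y y' = y * deriv (\<lambda>t. F t y') y"

definition seminorm_l :: "nat \<Rightarrow> (real \<Rightarrow> real) \<Rightarrow> real \<Rightarrow> real" where
  "seminorm_l l f y = Max ((\<lambda>j. \<bar>y ^ j * (deriv ^^ j) f y\<bar>) ` {0..l})"

definition I_diag :: "(real \<Rightarrow> real \<Rightarrow> real) \<Rightarrow> nat \<Rightarrow> real \<Rightarrow> real" where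
  "I_diag I k y = Lim (at_left y) (\<lambda>y'. (ydy ^^ k) I y y')"

definition indic_pos :: "real \<Rightarrow> real" where
  "indic_pos t = (if 0 < t then 1 else 0)"

end

theory Submission
  imports Defs "HOL-Computational_Algebra.Polynomial"
begin

lemma hd_cong:
  assumes "open S" "\<And>x. x \<in> S \<Longrightarrow> f x = g x"
  shows "higher_diff_on n S f = higher_diff_on n S g"
  using assms(2)
proof (induction n arbitrary: f g)
  case 0
  then show ?case using continuous_on_cong by auto
next
  case (Suc n)
  have d: "f differentiable (at x) \<longleftrightarrow> g differentiable (at x)" if "x \<in> S" for x
    using has_derivative_transform_within_open[OF _ assms(1) that] Suc.prems that
    unfolding differentiable_def by metis
  have fd: "frechet_derivative f (at x) = frechet_derivative g (at x)" if "x \<in> S" "f differentiable (at x)" for x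
  proof -
    have "(f has_derivative frechet_derivative f (at x)) (at x)" using that frechet_derivative_works by blast
    then have "(g has_derivative frechet_derivative f (at x)) (at x)"
      using has_derivative_transform_within_open[OF _ assms(1) that(1)] Suc.prems by metis
    then show ?thesis using frechet_derivative_at by metis
  qed
  show ?case
  proof
    assume H: "higher_diff_on (Suc n) S f"
    then have "\<forall>x\<in>S. g differentiable (at x)" using d by auto
    moreover have "higher_diff_on n S (\<lambda>x. frechet_derivative g (at x) v)" for v
    proof -
      have "higher_diff_on n S (\<lambda>x. frechet_derivative f (at x) v)" using H by auto
      then show ?thesis using Suc.IH[of "(\<lambda>x. frechet_derivative f (at x) v)" "(\<lambda>x. frechet_derivative g (at x) v)"] fd H by auto
    qed
    ultimately show "higher_diff_on (Suc n) S g" by simp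
  next
    assume H: "higher_diff_on (Suc n) S g"
    then have "\<forall>x\<in>S. f differentiable (at x)" using d by auto
    moreover have "higher_diff_on n S (\<lambda>x. frechet_derivative f (at x) v)" for v
    proof -
      have "higher_diff_on n S (\<lambda>x. frechet_derivative g (at x) v)" using H by auto
      then show ?thesis using Suc.IH[of "(\<lambda>x. frechet_derivative f (at x) v)" "(\<lambda>x. frechet_derivative g (at x) v)"] fd calculation by auto
    qed
    ultimately show "higher_diff_on (Suc n) S f" by simp
  qed
qed

lemma hd_Suc_imp: "higher_diff_on (Suc n) S f \<Longrightarrow> higher_diff_on n S f"
proof (induction n arbitrary: f)
  case 0
  then show ?case
    by (auto intro!: continuous_at_imp_continuous_on differentiable_imp_continuous_within)
next
  case (Suc n)
  then show ?case by auto
qed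

lemma hd_const: "higher_diff_on n S (\<lambda>x. c)"
proof (induction n arbitrary: c)
  case 0 then show ?case by simp
next
  case (Suc n)
  have "frechet_derivative (\<lambda>x. c) (at x) = (\<lambda>h. 0)" for x :: 'a
    by (metis frechet_derivative_at has_derivative_const)
  then show ?case using Suc by simp
qed

lemma hd_linear: "bounded_linear f \<Longrightarrow> higher_diff_on n S f"
proof (cases n)
  case 0
  assume "bounded_linear f" then show ?thesis using 0 by (simp add: linear_continuous_on)
next
  case (Suc m)
  assume bl: "bounded_linear f"
  have "frechet_derivative f (at x) = f" for x
    by (metis bl bounded_linear_imp_has_derivative frechet_derivative_at)
  then show ?thesis using Suc bl hd_const by (auto intro: bounded_linear_imp_differentiable)
qed

lemma hd_add:
  assumes "open S" "higher_diff_on n S f" "higher_diff_on n S g"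
  shows "higher_diff_on n S (\<lambda>x. f x + g x)"
  using assms(2,3)
proof (induction n arbitrary: f g)
  case 0 then show ?case by (auto intro: continuous_on_add)
next
  case (Suc n)
  have fd: "frechet_derivative (\<lambda>x. f x + g x) (at x) v = frechet_derivative f (at x) v + frechet_derivative g (at x) v"
    if "x \<in> S" for x v
  proof -
    have "((\<lambda>x. f x + g x) has_derivative (\<lambda>h. frechet_derivative f (at x) h + frechet_derivative g (at x) h)) (at x)"
      using Suc.prems that by (intro has_derivative_add) (auto simp: frechet_derivative_works)
    then show ?thesis by (metis frechet_derivative_at)
  qed
  have "higher_diff_on n S (\<lambda>x. frechet_derivative (\<lambda>x. f x + g x) (at x) v)" for v
    using hd_cong[OF assms(1), of "\<lambda>x. frechet_derivative (\<lambda>x. f x + g x) (at x) v"] fd Suc by auto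
  then show ?case using Suc.prems by auto
qed

lemma hd_mult:
  fixes f g :: "'a::real_normed_vector \<Rightarrow> real"
  assumes "open S" "higher_diff_on n S f" "higher_diff_on n S g"
  shows "higher_diff_on n S (\<lambda>x. f x * g x)"
  using assms(2,3)
proof (induction n arbitrary: f g)
  case 0 then show ?case by (auto intro: continuous_on_mult)
next
  case (Suc n)
  have fd: "frechet_derivative (\<lambda>x. f x * g x) (at x) v = f x * frechet_derivative g (at x) v + frechet_derivative f (at x) v * g x"
    if "x \<in> S" for x v
  proof -
    have "((\<lambda>x. f x * g x) has_derivative (\<lambda>h. f x * frechet_derivative g (at x) h + frechet_derivative f (at x) h * g x)) (at x)"
      using Suc.prems that by (intro has_derivative_mult) (auto simp: frechet_derivative_works)
    then show ?thesis by (metis frechet_derivative_at)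
  qed
  have "higher_diff_on n S (\<lambda>x. f x * frechet_derivative g (at x) v + frechet_derivative f (at x) v * g x)" for v
    using Suc.prems hd_Suc_imp by (intro hd_add[OF assms(1)] Suc.IH) auto
  then have "higher_diff_on n S (\<lambda>x. frechet_derivative (\<lambda>x. f x * g x) (at x) v)" for v
    using hd_cong[OF assms(1), of "\<lambda>x. frechet_derivative (\<lambda>x. f x * g x) (at x) v"] fd by auto
  then show ?case using Suc.prems by auto
qed

lemma hd_inverse:
  fixes f :: "'a::real_normed_vector \<Rightarrow> real"
  assumes "open S" "higher_diff_on n S f" "\<forall>x\<in>S. f x \<noteq> 0"
  shows "higher_diff_on n S (\<lambda>x. inverse (f x))"
  using assms(2,3)
proof (induction n arbitrary: f)
  case 0 then show ?case by (auto intro!: continuous_on_inverse)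
next
  case (Suc n)
  have fd: "frechet_derivative (\<lambda>x. inverse (f x)) (at x) v = (-1) * (frechet_derivative f (at x) v * (inverse (f x) * inverse (f x)))"
    if "x \<in> S" for x v
  proof -
    have "((\<lambda>x. inverse (f x)) has_derivative (\<lambda>h. - (inverse (f x) * frechet_derivative f (at x) h * inverse (f x)))) (at x)"
      using Suc.prems that by (intro Deriv.has_derivative_inverse) (auto simp: frechet_derivative_works)
    then show ?thesis by (metis (no_types) frechet_derivative_at mult.commute mult.left_commute mult_minus1)
  qed
  have dd: "\<forall>x\<in>S. (\<lambda>x. inverse (f x)) differentiable (at x)"
    using Suc.prems unfolding differentiable_def
    by (metis frechet_derivative_works Deriv.has_derivative_inverse higher_diff_on.simps(2))
  have "higher_diff_on n S (\<lambda>x. (-1) * (frechet_derivative f (at x) v * (inverse (f x) * inverse (f x))))" for v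
    using Suc.prems hd_Suc_imp by (intro hd_mult[OF assms(1)] hd_const Suc.IH) auto
  then have "higher_diff_on n S (\<lambda>x. frechet_derivative (\<lambda>x. inverse (f x)) (at x) v)" for v
    using hd_cong[OF assms(1), of "\<lambda>x. frechet_derivative (\<lambda>x. inverse (f x)) (at x) v"] fd by auto
  then show ?case using dd by auto
qed

lemma hd_ln:
  fixes f :: "'a::real_normed_vector \<Rightarrow> real"
  assumes "open S" "higher_diff_on n S f" "\<And>x. x \<in> S \<Longrightarrow> f x > 0"
  shows "higher_diff_on n S (\<lambda>x. ln (f x))"
proof (cases n)
  case 0 then show ?thesis using assms by (auto intro!: continuous_on_ln simp: less_imp_neq[symmetric])
next
  case (Suc m)
  have fd: "frechet_derivative (\<lambda>x. ln (f x)) (at x) v = frechet_derivative f (at x) v * inverse (f x)"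
    if "x \<in> S" for x v
  proof -
    have "((\<lambda>x. ln (f x)) has_derivative (\<lambda>h. frechet_derivative f (at x) h * inverse (f x))) (at x)"
      using assms Suc that by (intro has_derivative_ln) (auto simp: frechet_derivative_works)
    then show ?thesis by (metis frechet_derivative_at)
  qed
  have dd: "\<forall>x\<in>S. (\<lambda>x. ln (f x)) differentiable (at x)"
    using assms Suc unfolding differentiable_def 
    by (metis (full_types) frechet_derivative_works has_derivative_ln higher_diff_on.simps(2))
  have "higher_diff_on m S (\<lambda>x. frechet_derivative f (at x) v * inverse (f x))" for v
    using assms Suc hd_Suc_imp by (intro hd_mult[OF assms(1)] hd_inverse[OF assms(1)]) (auto simp: less_imp_neq[symmetric])
  then have "higher_diff_on m S (\<lambda>x. frechet_derivative (\<lambda>x. ln (f x)) (at x) v)" for v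
    using hd_cong[OF assms(1), of "\<lambda>x. frechet_derivative (\<lambda>x. ln (f x)) (at x) v"] fd by auto
  then show ?thesis using dd Suc by auto
qed

definition uu :: "real \<Rightarrow> real" where "uu y = 1 / (1 + y\<^sup>2)"

definition Ifun :: "real \<Rightarrow> real \<Rightarrow> real" where
  "Ifun y y' = (2 * uu y - 1) * (2 * uu y' - 1)
     + 4 * (uu y' * (1 - uu y')) * ((2 * uu y - 1) * (ln y - ln y' - 1) + 2 * uu y)"

definition DIf :: "real \<Rightarrow> real \<Rightarrow> real" where
  "DIf y y' = 4 * (uu y' * (1 - uu y')) * (2 * uu y - 1) - 4 * (uu y * (1 - uu y)) * (2 * uu y' - 1)
     - 16 * (uu y * (1 - uu y)) * (uu y' * (1 - uu y')) * (ln y - ln y')"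

lemma uu_pos: "uu y > 0" unfolding uu_def by (simp add: add_pos_nonneg)
lemma uu_le1: "uu y \<le> 1" unfolding uu_def by (simp add: add_pos_nonneg)
lemma one_minus_uu: "1 - uu y = y\<^sup>2 * uu y"
proof -
  have "1 + y\<^sup>2 \<noteq> 0" by (smt (verit) zero_le_power2)
  then show ?thesis unfolding uu_def by (simp add: field_simps)
qed

lemma uu_deriv: "y > 0 \<Longrightarrow> (uu has_real_derivative (-2 * (uu y * (1 - uu y)) / y)) (at y)"
proof -
  assume y: "y > 0"
  have "(uu has_real_derivative (- (2 * y) / (1 + y\<^sup>2)\<^sup>2)) (at y)"
    unfolding uu_def[abs_def]
    by (auto intro!: derivative_eq_intros simp: field_simps power2_eq_square add_pos_nonneg)
       (smt (verit) not_sum_squares_lt_zero)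
  moreover have "- (2 * y) / (1 + y\<^sup>2)\<^sup>2 = -2 * (uu y * (1 - uu y)) / y"
  proof -
    have "-2 * (uu y * (1 - uu y)) / y = -2 * y * (uu y)\<^sup>2"
      unfolding one_minus_uu using y by (simp add: field_simps power2_eq_square)
    also have "\<dots> = - (2 * y) / (1 + y\<^sup>2)\<^sup>2" unfolding uu_def by (simp add: power_divide)
    finally show ?thesis by simp
  qed
  ultimately show ?thesis by simp
qed

lemma Ifun_deriv:
  assumes "y > 0"
  shows "((\<lambda>t. Ifun t y') has_real_derivative (DIf y y' / y)) (at y)"
proof -
  let ?a = "uu y * (1 - uu y)" and ?b = "uu y' * (1 - uu y')" and ?u = "uu y" and ?v = "uu y'"
  have "((\<lambda>t. Ifun t y') has_real_derivative
     (2 * (-2 * ?a / y)) * (2 * ?v - 1) + 4 * ?b * ((2 * (-2 * ?a / y)) * (ln y - ln y' - 1)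
        + (2 * ?u - 1) * (1 / y) + 2 * (-2 * ?a / y))) (at y)"
    unfolding Ifun_def using assms
    by (auto intro!: derivative_eq_intros uu_deriv)
  moreover have "(2 * (-2 * ?a / y)) * (2 * ?v - 1) + 4 * ?b * ((2 * (-2 * ?a / y)) * (ln y - ln y' - 1)
        + (2 * ?u - 1) * (1 / y) + 2 * (-2 * ?a / y)) = DIf y y' / y"
    unfolding DIf_def divide_inverse by algebra
  ultimately show ?thesis by simp
qed

lemma DIf_deriv:
  assumes "y > 0"
  shows "((\<lambda>t. DIf t y') has_real_derivative (-8 * (uu y * (1 - uu y)) * Ifun y y' / y)) (at y)"
proof -
  let ?a = "uu y * (1 - uu y)" and ?b = "uu y' * (1 - uu y')" and ?u = "uu y" and ?v = "uu y'"
  let ?U = "-2 * ?a / y"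
  have "((\<lambda>t. DIf t y') has_real_derivative
     4 * ?b * (2 * ?U) - 4 * (?U * (1 - ?u) - ?u * ?U) * (2 * ?v - 1)
      - 16 * ((?U * (1 - ?u) - ?u * ?U) * ?b * (ln y - ln y') + ?a * ?b * (1 / y))) (at y)"
    unfolding DIf_def using assms
    apply (auto intro!: derivative_eq_intros uu_deriv)
    apply (simp only: divide_inverse)
    apply algebra
    done
  moreover have "4 * ?b * (2 * ?U) - 4 * (?U * (1 - ?u) - ?u * ?U) * (2 * ?v - 1)
      - 16 * ((?U * (1 - ?u) - ?u * ?U) * ?b * (ln y - ln y') + ?a * ?b * (1 / y))
      = -8 * (uu y * (1 - uu y)) * Ifun y y' / y"
  proof -
    have y0: "y \<noteq> 0" using assms by simp
    show ?thesis unfolding Ifun_def divide_inverse by algebra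
  qed
  ultimately show ?thesis by simp
qed

definition Aq :: "real poly" where "Aq = [:0, 1, -1:]"

lemma poly_Aq: "poly Aq x = x * (1 - x)"
  unfolding Aq_def by (simp add: algebra_simps)

definition Tstep :: "real poly \<times> real poly \<Rightarrow> real poly \<times> real poly" where
  "Tstep PR = (smult (-2) (Aq * pderiv (fst PR)) - smult 8 (Aq * snd PR),
               fst PR - smult 2 (Aq * pderiv (snd PR)))"

primrec PRk :: "nat \<Rightarrow> real poly \<times> real poly" where
  "PRk 0 = (1, 0)"
| "PRk (Suc k) = Tstep (PRk k)"

definition Fk :: "real poly \<times> real poly \<Rightarrow> real \<Rightarrow> real \<Rightarrow> real" where
  "Fk PR y y' = poly (fst PR) (uu y) * Ifun y y' + poly (snd PR) (uu y) * DIf y y'"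

lemma poly_uu_deriv:
  assumes "y > 0"
  shows "((\<lambda>t. poly P (uu t)) has_real_derivative poly (pderiv P) (uu y) * (-2 * (uu y * (1 - uu y)) / y)) (at y)"
  using DERIV_chain2[OF poly_DERIV uu_deriv[OF assms]] by simp

lemma Fk_deriv:
  assumes "y > 0"
  shows "((\<lambda>t. Fk PR t y') has_real_derivative Fk (Tstep PR) y y' / y) (at y)"
proof -
  have "((\<lambda>t. Fk PR t y') has_real_derivative
     (poly (pderiv (fst PR)) (uu y) * (-2 * (uu y * (1 - uu y)) / y)) * Ifun y y' + (DIf y y' / y) * poly (fst PR) (uu y)
   + ((poly (pderiv (snd PR)) (uu y) * (-2 * (uu y * (1 - uu y)) / y)) * DIf y y' + (-8 * (uu y * (1 - uu y)) * Ifun y y' / y) * poly (snd PR) (uu y))) (at y)"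
    unfolding Fk_def
    by (intro DERIV_add DERIV_mult poly_uu_deriv Ifun_deriv DIf_deriv assms)
  moreover have "(poly (pderiv (fst PR)) (uu y) * (-2 * (uu y * (1 - uu y)) / y)) * Ifun y y' + (DIf y y' / y) * poly (fst PR) (uu y)
   + ((poly (pderiv (snd PR)) (uu y) * (-2 * (uu y * (1 - uu y)) / y)) * DIf y y' + (-8 * (uu y * (1 - uu y)) * Ifun y y' / y) * poly (snd PR) (uu y))
   = Fk (Tstep PR) y y' / y"
    unfolding Fk_def Tstep_def by (simp add: poly_Aq divide_inverse) algebra
  ultimately show ?thesis by simp
qed

lemma ydy_pow:
  assumes "y > 0"
  shows "(ydy ^^ k) Ifun y y' = Fk (PRk k) y y'"
  using assms
proof (induction k arbitrary: y)
  case 0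
  then show ?case by (simp add: Fk_def)
next
  case (Suc k)
  have ev: "eventually (\<lambda>t. (ydy ^^ k) Ifun t y' = Fk (PRk k) t y') (nhds y)"
    using eventually_nhds_in_open[of "{0<..}" y] Suc by (auto elim!: eventually_mono)
  have "(ydy ^^ Suc k) Ifun y y' = y * deriv (\<lambda>t. (ydy ^^ k) Ifun t y') y"
    by (simp add: ydy_def)
  also have "\<dots> = y * deriv (\<lambda>t. Fk (PRk k) t y') y"
    using deriv_cong_ev[OF ev refl] by simp
  also have "\<dots> = y * (Fk (Tstep (PRk k)) y y' / y)"
    using DERIV_imp_deriv[OF Fk_deriv[OF Suc.prems]] by simp
  also have "\<dots> = Fk (PRk (Suc k)) y y'" using Suc.prems by simp
  finally show ?case .
qed

lemma ydy_Ifun: "y > 0 \<Longrightarrow> ydy Ifun y y' = DIf y y'"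
  using ydy_pow[of y 1 y'] by (simp add: Fk_def Tstep_def)

lemma Tstep_dvd:
  assumes "Aq dvd fst PR" "Aq dvd snd PR"
  shows "Aq dvd fst (Tstep PR) \<and> Aq dvd snd (Tstep PR)"
  unfolding Tstep_def using assms
  by (auto intro!: dvd_diff dvd_smult)

lemma PRk_dvd: "k \<ge> 2 \<Longrightarrow> Aq dvd fst (PRk k) \<and> Aq dvd snd (PRk k)"
proof (induction k rule: dec_induct)
  case base
  then show ?case by (auto simp add: numeral_2_eq_2 Tstep_def intro!: dvd_smult)
next
  case (step n)
  then show ?case using Tstep_dvd by simp
qed

definition pbound :: "real poly \<Rightarrow> real" where
  "pbound p = (\<Sum>i\<le>degree p. \<bar>coeff p i\<bar>)"

lemma pbound_nonneg: "pbound p \<ge> 0"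
  unfolding pbound_def by (simp add: sum_nonneg)

lemma poly_bound01:
  assumes "0 \<le> x" "x \<le> 1"
  shows "\<bar>poly p x\<bar> \<le> pbound p"
proof -
  have "\<bar>poly p x\<bar> = \<bar>\<Sum>i\<le>degree p. coeff p i * x ^ i\<bar>" by (simp add: poly_altdef)
  also have "\<dots> \<le> (\<Sum>i\<le>degree p. \<bar>coeff p i * x ^ i\<bar>)" by (rule sum_abs)
  also have "\<dots> \<le> (\<Sum>i\<le>degree p. \<bar>coeff p i\<bar>)"
  proof (rule sum_mono)
    fix i
    have "\<bar>x ^ i\<bar> \<le> 1" using assms by (simp add: power_le_one)
    then show "\<bar>coeff p i * x ^ i\<bar> \<le> \<bar>coeff p i\<bar>"
      by (simp add: abs_mult mult_left_le)
  qed
  finally show ?thesis unfolding pbound_def .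
qed

lemma Aq_dvd_bound:
  assumes "Aq dvd p" "0 \<le> x" "x \<le> 1"
  shows "\<bar>poly p x\<bar> \<le> pbound (p div Aq) * (x * (1 - x))"
proof -
  have "p = Aq * (p div Aq)" using assms(1) by simp
  then have "poly p x = x * (1 - x) * poly (p div Aq) x" by (metis poly_Aq poly_mult)
  then have "\<bar>poly p x\<bar> = x * (1 - x) * \<bar>poly (p div Aq) x\<bar>" using assms by (simp add: abs_mult)
  also have "\<dots> \<le> x * (1 - x) * pbound (p div Aq)"
    using poly_bound01[OF assms(2,3)] assms by (intro mult_left_mono) auto
  finally show ?thesis by (simp add: mult.commute)
qed

primrec Sd :: "real poly \<Rightarrow> nat \<Rightarrow> real poly" where
  "Sd S 0 = S"
| "Sd S (Suc j) = smult (-2) (Aq * pderiv (Sd S j)) - smult (of_nat j) (Sd S j)"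

lemma Sd_dvd: "Aq dvd S \<Longrightarrow> Aq dvd Sd S j"
  by (induction j) (auto intro!: dvd_diff dvd_smult)

lemma deriv_pow_poly:
  assumes "\<And>y. y > 0 \<Longrightarrow> f y = poly S (uu y)"
  shows "y > 0 \<Longrightarrow> (deriv ^^ j) f y = poly (Sd S j) (uu y) / y ^ j"
proof (induction j arbitrary: y)
  case 0
  then show ?case using assms by simp
next
  case (Suc j)
  have ev: "eventually (\<lambda>t. (deriv ^^ j) f t = poly (Sd S j) (uu t) / t ^ j) (nhds y)"
    using eventually_nhds_in_open[of "{0<..}" y] Suc by (auto elim!: eventually_mono)
  have D: "((\<lambda>t. poly (Sd S j) (uu t) / t ^ j) has_real_derivative poly (Sd S (Suc j)) (uu y) / y ^ Suc j) (at y)"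
  proof -
    have "((\<lambda>t. poly (Sd S j) (uu t) / t ^ j) has_real_derivative
       ((poly (pderiv (Sd S j)) (uu y) * (-2 * (uu y * (1 - uu y)) / y)) * y ^ j - poly (Sd S j) (uu y) * (of_nat j * y ^ (j - 1)))
          / (y ^ j * y ^ j)) (at y)"
      using Suc.prems by (intro DERIV_divide poly_uu_deriv DERIV_pow) auto
    moreover have "((poly (pderiv (Sd S j)) (uu y) * (-2 * (uu y * (1 - uu y)) / y)) * y ^ j - poly (Sd S j) (uu y) * (of_nat j * y ^ (j - 1)))
          / (y ^ j * y ^ j) = poly (Sd S (Suc j)) (uu y) / y ^ Suc j"
    proof (cases j)
      case 0 then show ?thesis using Suc.prems by (simp add: poly_Aq field_simps)
    next
      case (Suc m)
      then show ?thesis using Suc.prems by (simp add: poly_Aq field_simps)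
    qed
    ultimately show ?thesis by simp
  qed
  have "(deriv ^^ Suc j) f y = deriv (\<lambda>t. poly (Sd S j) (uu t) / t ^ j) y"
    using deriv_cong_ev[OF ev refl] by simp
  also have "\<dots> = poly (Sd S (Suc j)) (uu y) / y ^ Suc j" using DERIV_imp_deriv[OF D] .
  finally show ?case .
qed

lemma deriv_pow_poly_differentiable:
  assumes "\<And>y. y > 0 \<Longrightarrow> f y = poly S (uu y)" "y > 0"
  shows "(deriv ^^ j) f differentiable (at y)"
proof -
  have y0: "y ^ j \<noteq> 0" using assms(2) by simp
  note h = has_field_derivative_imp_has_derivative[OF DERIV_divide[OF poly_uu_deriv[OF assms(2), of "Sd S j"] DERIV_pow[of j] y0]]
  have yin: "y \<in> {0<..}" using assms(2) by simp
  have eq: "\<And>x. x \<in> {0<..} \<Longrightarrow> poly (Sd S j) (uu x) / x ^ j = (deriv ^^ j) f x"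
    using deriv_pow_poly[OF assms(1)] by auto
  show ?thesis using has_derivative_transform_within_open[OF h open_greaterThan yin eq]
    by (rule differentiableI)
qed

lemma jbr_sq: "(jbr a)\<^sup>2 = 1 + a\<^sup>2"
  unfolding jbr_def by (simp add: add_nonneg_nonneg)

lemma jbr_pos: "jbr a > 0"
  unfolding jbr_def by (simp add: add_pos_nonneg)

lemma uu_expr1: "2 * uu y - 1 = (1 - y\<^sup>2) / (1 + y\<^sup>2)"
proof -
  have h: "1 + y\<^sup>2 \<noteq> 0" by (smt (verit) zero_le_power2)
  show ?thesis unfolding uu_def using h by (simp add: field_simps)
qed

lemma uu_expr2: "uu y * (1 - uu y) = y\<^sup>2 / (1 + y\<^sup>2)\<^sup>2"
proof -
  have h: "1 + y\<^sup>2 \<noteq> 0" by (smt (verit) zero_le_power2)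
  show ?thesis unfolding one_minus_uu unfolding uu_def using h by (simp add: field_simps power2_eq_square)
qed

lemma DIf_alg0:
  fixes p q L A B :: real
  assumes "A \<noteq> 0" "B \<noteq> 0" "A = 1 + p" "B = 1 + q"
  shows "4 * (q / B\<^sup>2) * ((1 - p) / A) - 4 * (p / A\<^sup>2) * ((1 - q) / B)
     - 16 * (p / A\<^sup>2) * (q / B\<^sup>2) * L
     = 4 * ((q - p) * (1 + p * q) - 4 * p * q * L) / (A\<^sup>2 * B\<^sup>2)"
proof -
  have "4 * (q / B\<^sup>2) * ((1 - p) / A) - 4 * (p / A\<^sup>2) * ((1 - q) / B)
     - 16 * (p / A\<^sup>2) * (q / B\<^sup>2) * L
     = (4 * q * (1 - p) * A - 4 * p * (1 - q) * B - 16 * p * q * L) / (A\<^sup>2 * B\<^sup>2)"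
    using assms(1,2) by (simp add: field_simps power2_eq_square)
  also have "4 * q * (1 - p) * A - 4 * p * (1 - q) * B - 16 * p * q * L = 4 * ((q - p) * (1 + p * q) - 4 * p * q * L)"
    unfolding assms(3,4) by (simp add: algebra_simps)
  finally show ?thesis .
qed

lemma DIf_alg:
  fixes p q L :: real
  assumes "1 + p \<noteq> 0" "1 + q \<noteq> 0"
  shows "4 * (q / (1 + q)\<^sup>2) * ((1 - p) / (1 + p)) - 4 * (p / (1 + p)\<^sup>2) * ((1 - q) / (1 + q))
     - 16 * (p / (1 + p)\<^sup>2) * (q / (1 + q)\<^sup>2) * L
     = 4 * ((q - p) * (1 + p * q) - 4 * p * q * L) / ((1 + p)\<^sup>2 * (1 + q)\<^sup>2)"
  using DIf_alg0[OF assms refl refl] .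

lemma DIf_formula:
  assumes "y > 0" "y' > 0"
  shows "DIf y y' = 4 * ((y'\<^sup>2 - y\<^sup>2) * (1 + y\<^sup>2 * y'\<^sup>2) - 4 * y\<^sup>2 * y'\<^sup>2 * (ln y - ln y'))
            / ((1 + y\<^sup>2)\<^sup>2 * (1 + y'\<^sup>2)\<^sup>2)"
proof -
  have h1: "1 + y\<^sup>2 \<noteq> 0" "1 + y'\<^sup>2 \<noteq> 0" by (smt (verit) zero_le_power2)+
  show ?thesis unfolding DIf_def uu_expr1 uu_expr2 using DIf_alg[OF h1, of "ln y - ln y'"]
    by (simp add: mult.assoc)
qed

lemma DIf_bound:
  assumes "0 < y'" "y' < y"
  shows "\<bar>DIf y y'\<bar> \<le> 8 * ((y - y') / y) * min (y\<^sup>2 / (1 + y\<^sup>2)) (1 / (1 + y'\<^sup>2))"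
proof -
  define p where "p = y\<^sup>2"
  define q where "q = y'\<^sup>2"
  define L where "L = ln y - ln y'"
  define d where "d = y - y'"
  have y: "y > 0" using assms by simp
  have p0: "p > 0" "q > 0" unfolding p_def q_def using assms by auto
  have d0: "d > 0" unfolding d_def using assms by simp
  have L0: "L \<ge> 0" unfolding L_def using assms by simp
  have L1: "L \<le> d / y'"
  proof -
    have "L = ln (y / y')" unfolding L_def using assms by (simp add: ln_div)
    also have "\<dots> \<le> y / y' - 1" using assms by (intro ln_le_minus_one) simp
    also have "\<dots> = d / y'" unfolding d_def using assms by (simp add: field_simps)
    finally show ?thesis .
  qed
  have Dpos: "(1 + p)\<^sup>2 * (1 + q)\<^sup>2 > 0" using p0 by simp
  have eq: "DIf y y' = 4 * ((q - p) * (1 + p * q) - 4 * p * q * L) / ((1 + p)\<^sup>2 * (1 + q)\<^sup>2)"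
    unfolding p_def q_def L_def using DIf_formula[OF y assms(1)] by simp
  have pq: "q < p" unfolding p_def q_def using assms by (simp add: power_strict_mono)
  have Nneg: "(q - p) * (1 + p * q) - 4 * p * q * L \<le> 0"
  proof -
    have "(q - p) * (1 + p * q) \<le> 0" using pq p0 by (intro mult_nonpos_nonneg) auto
    moreover have "4 * p * q * L \<ge> 0" using p0 L0 by simp
    ultimately show ?thesis by linarith
  qed
  have absN: "\<bar>(q - p) * (1 + p * q) - 4 * p * q * L\<bar> = (p - q) * (1 + p * q) + 4 * p * q * L"
    using Nneg by (simp add: algebra_simps)
  have b1: "4 * p * q * L \<le> 4 * y\<^sup>2 * y' * d"
  proof -
    have "4 * p * q * L \<le> 4 * p * q * (d / y')" using L1 p0 by (intro mult_left_mono) auto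
    also have "\<dots> = 4 * y\<^sup>2 * y' * d" unfolding p_def q_def using assms by (simp add: field_simps power2_eq_square)
    finally show ?thesis .
  qed
  have b2: "(p - q) * (1 + p * q) \<le> 2 * y * d * (1 + p * q)"
  proof -
    have "p - q = d * (y + y')" unfolding p_def q_def d_def by (simp add: algebra_simps power2_eq_square)
    also have "\<dots> \<le> d * (2 * y)" using assms d0 by (intro mult_left_mono) auto
    also have "\<dots> = 2 * y * d" by simp
    finally show ?thesis using p0 by (intro mult_right_mono) (auto simp: add_pos_pos)
  qed
  have b3: "(1 + y * y')\<^sup>2 \<le> (1 + p) * (1 + q)"
  proof -
    have "0 \<le> (y - y')\<^sup>2" by simp
    then have "2 * y * y' \<le> y\<^sup>2 + y'\<^sup>2" by (simp add: power2_eq_square algebra_simps)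
    then show ?thesis unfolding p_def q_def by (simp add: algebra_simps power2_eq_square power_mult_distrib)
  qed
  have "\<bar>DIf y y'\<bar> = 4 * ((p - q) * (1 + p * q) + 4 * p * q * L) / ((1 + p)\<^sup>2 * (1 + q)\<^sup>2)"
    unfolding eq abs_divide abs_mult absN using Dpos by simp
  also have "\<dots> \<le> 4 * (2 * y * d * (1 + y * y')\<^sup>2) / ((1 + p)\<^sup>2 * (1 + q)\<^sup>2)"
  proof -
    have "(p - q) * (1 + p * q) + 4 * p * q * L \<le> 2 * y * d * (1 + y * y')\<^sup>2"
    proof -
      have "2 * y * d * (1 + p * q) + 4 * y\<^sup>2 * y' * d = 2 * y * d * (1 + y * y')\<^sup>2"
        unfolding p_def q_def by (simp add: algebra_simps power2_eq_square)
      then show ?thesis using b1 b2 by linarith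
    qed
    then show ?thesis using Dpos by (intro divide_right_mono) auto
  qed
  also have "\<dots> \<le> 4 * (2 * y * d * ((1 + p) * (1 + q))) / ((1 + p)\<^sup>2 * (1 + q)\<^sup>2)"
    using b3 Dpos y d0 by (intro divide_right_mono mult_left_mono) auto
  also have "\<dots> = 8 * (d / y) * (p / ((1 + p) * (1 + q)))"
  proof -
    have h: "1 + p \<noteq> 0" "1 + q \<noteq> 0" "y \<noteq> 0" using p0 y by auto
    define X where "X = (1 + p) * (1 + q)"
    have X0: "X \<noteq> 0" unfolding X_def using h by simp
    have XX: "(1 + p)\<^sup>2 * (1 + q)\<^sup>2 = X * X" unfolding X_def by (simp add: power2_eq_square algebra_simps)
    have "4 * (2 * y * d * ((1 + p) * (1 + q))) / ((1 + p)\<^sup>2 * (1 + q)\<^sup>2) = 8 * y * d / X"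
      unfolding XX using X0 by (simp add: X_def[symmetric] field_simps)
    also have "\<dots> = 8 * (d / y) * (p / X)" unfolding p_def using h by (simp add: power2_eq_square field_simps)
    finally show ?thesis unfolding X_def .
  qed
  also have "\<dots> \<le> 8 * (d / y) * min (p / (1 + p)) (1 / (1 + q))"
  proof -
    have "p / ((1 + p) * (1 + q)) \<le> p / (1 + p)"
      using p0 by (simp add: divide_le_cancel frac_le)
    moreover have "p / ((1 + p) * (1 + q)) \<le> 1 / (1 + q)"
    proof -
      have "p / (1 + p) \<le> 1" using p0 by simp
      then have "(p / (1 + p)) / (1 + q) \<le> 1 / (1 + q)" using p0 by (intro divide_right_mono) auto
      then show ?thesis by (simp add: mult.commute)
    qed
    ultimately show ?thesis using d0 y by (intro mult_left_mono) auto
  qed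
  finally show ?thesis unfolding p_def q_def d_def .
qed

lemma Ifun_bound:
  assumes "0 < y'" "y' < y"
  shows "\<bar>Ifun y y'\<bar> \<le> 6 * (1 + 1 / (jbr y')\<^sup>2 * ln (2 + jbr y / jbr y'))"
proof -
  define u where "u = uu y"
  define v where "v = uu y'"
  define w where "w = 1 - v"
  define L where "L = ln y - ln y'"
  define L' where "L' = ln (2 + jbr y / jbr y')"
  have y: "y > 0" using assms by simp
  have u01: "0 < u" "u \<le> 1" "0 < v" "v \<le> 1" unfolding u_def v_def using uu_pos uu_le1 by auto
  have L0: "L \<ge> 0" unfolding L_def using assms by simp
  have v_eq: "1 / (jbr y')\<^sup>2 = v" unfolding v_def uu_def jbr_sq by simp
  have w_eq: "w = y'\<^sup>2 / (1 + y'\<^sup>2)" 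
  proof -
    have h: "1 + y'\<^sup>2 > 0" by (simp add: add_pos_nonneg)
    show ?thesis unfolding w_def v_def uu_def using h by (simp add: field_simps)
  qed
  have w0: "0 < w" "w < 1"
  proof -
    have a: "0 < y'\<^sup>2" using assms by simp
    have h: "1 + y'\<^sup>2 > 0" by (simp add: add_pos_nonneg)
    show "0 < w" unfolding w_eq by (rule divide_pos_pos[OF a h])
    show "w < 1" unfolding w_eq by (subst divide_less_eq_1_pos[OF h]) simp
  qed
  have jr: "jbr y / jbr y' \<ge> 1"
    using jbr_pos[of y'] assms unfolding jbr_def by (simp add: power_strict_mono less_imp_le)
  have L'0: "L' \<ge> 0" unfolding L'_def using jr by simp
  have part1: "\<bar>Ifun y y'\<bar> \<le> 4 + 4 * (v * w) * L"
  proof -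
    have a1: "\<bar>(2 * u - 1) * (2 * v - 1)\<bar> \<le> 1"
    proof -
      have "\<bar>2 * u - 1\<bar> \<le> 1" "\<bar>2 * v - 1\<bar> \<le> 1" using u01 by (auto simp add: abs_le_iff)
      then show ?thesis unfolding abs_mult by (intro mult_le_one) auto
    qed
    have a2: "\<bar>(2 * u - 1) * (L - 1) + 2 * u\<bar> \<le> L + 3"
    proof -
      have "\<bar>2 * u - 1\<bar> \<le> 1" using u01 by (simp add: abs_le_iff)
      then have "\<bar>2 * u - 1\<bar> * \<bar>L - 1\<bar> \<le> 1 * \<bar>L - 1\<bar>" by (intro mult_right_mono) auto
      then have "\<bar>(2 * u - 1) * (L - 1)\<bar> \<le> \<bar>L - 1\<bar>" by (simp add: abs_mult)
      then show ?thesis using u01 L0 by linarith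
    qed
    have vw: "0 \<le> v * w" "4 * (v * w) \<le> 1"
    proof -
      show "0 \<le> v * w" using u01 w0 by simp
      have "0 \<le> (2 * v - 1)\<^sup>2" by simp
      then show "4 * (v * w) \<le> 1" unfolding w_def by (simp add: power2_eq_square algebra_simps)
    qed
    have "\<bar>Ifun y y'\<bar> \<le> \<bar>(2 * u - 1) * (2 * v - 1)\<bar> + 4 * (v * w) * \<bar>(2 * u - 1) * (L - 1) + 2 * u\<bar>"
    proof -
      have "Ifun y y' = (2 * u - 1) * (2 * v - 1) + 4 * (v * w) * ((2 * u - 1) * (L - 1) + 2 * u)"
        unfolding Ifun_def u_def v_def w_def L_def by simp
      also have "\<bar>\<dots>\<bar> \<le> \<bar>(2 * u - 1) * (2 * v - 1)\<bar> + \<bar>4 * (v * w) * ((2 * u - 1) * (L - 1) + 2 * u)\<bar>"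
        by (rule abs_triangle_ineq)
      also have "\<bar>4 * (v * w) * ((2 * u - 1) * (L - 1) + 2 * u)\<bar> = 4 * (v * w) * \<bar>(2 * u - 1) * (L - 1) + 2 * u\<bar>"
      proof -
        have vw4: "0 \<le> 4 * (v * w)" using vw by simp
        show ?thesis unfolding abs_mult[of "4 * (v * w)"] abs_of_nonneg[OF vw4] ..
      qed
      finally show ?thesis by simp
    qed
    also have "\<dots> \<le> 1 + 4 * (v * w) * (L + 3)" using a1 a2 vw by (intro add_mono mult_left_mono) auto
    also have "\<dots> \<le> 4 + 4 * (v * w) * L" using vw by (simp add: algebra_simps)
    finally show ?thesis .
  qed
  have key: "2 * w * L \<le> 2 * L' + 1"
  proof -
    have e1: "2 * L = ln (1 + y\<^sup>2) - ln (1 + y'\<^sup>2) + ln (y\<^sup>2 / (1 + y\<^sup>2)) - ln w"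
    proof -
      have h1: "0 < 1 + y\<^sup>2" "0 < 1 + y'\<^sup>2" by (simp_all add: add_pos_nonneg)
      have "ln (y\<^sup>2 / (1 + y\<^sup>2)) = ln (y\<^sup>2) - ln (1 + y\<^sup>2)"
        by (rule ln_divide_pos) (use y h1 in auto)
      moreover have "ln (y\<^sup>2) = 2 * ln y" using y by (simp add: ln_realpow)
      moreover have "ln w = ln (y'\<^sup>2) - ln (1 + y'\<^sup>2)" unfolding w_eq
        by (rule ln_divide_pos) (use assms h1 in auto)
      moreover have "ln (y'\<^sup>2) = 2 * ln y'" using assms by (simp add: ln_realpow)
      ultimately show ?thesis unfolding L_def by simp
    qed
    have e2: "ln (y\<^sup>2 / (1 + y\<^sup>2)) \<le> 0" 
    proof -
      have h: "1 + y\<^sup>2 \<noteq> 0" by (smt (verit) zero_le_power2)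
      then show ?thesis using y by (simp add: add_pos_nonneg)
    qed
    have e3: "- (w * ln w) \<le> 1"
    proof -
      have "- ln w = ln (1 / w)" using w0 by (simp add: ln_div)
      also have "\<dots> \<le> 1 / w - 1" using w0 by (intro ln_le_minus_one) simp
      finally have "- ln w \<le> 1 / w - 1" .
      then have "w * (- ln w) \<le> w * (1 / w - 1)" using w0 by (intro mult_left_mono) auto
      then show ?thesis using w0 by (simp add: algebra_simps)
    qed
    have e4: "ln (1 + y\<^sup>2) - ln (1 + y'\<^sup>2) = 2 * ln (jbr y / jbr y')"
      unfolding jbr_def using assms
      by (simp add: ln_div ln_sqrt add_pos_nonneg) (smt (verit) zero_le_power2)
    have e5: "0 \<le> ln (jbr y / jbr y')" "ln (jbr y / jbr y') \<le> L'"
      unfolding L'_def using jr by auto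
    have "2 * w * L = w * (2 * ln (jbr y / jbr y')) + w * ln (y\<^sup>2 / (1 + y\<^sup>2)) - w * ln w"
    proof -
      have "2 * L = 2 * ln (jbr y / jbr y') + ln (y\<^sup>2 / (1 + y\<^sup>2)) - ln w" using e1 e4 by simp
      then have "w * (2 * L) = w * (2 * ln (jbr y / jbr y') + ln (y\<^sup>2 / (1 + y\<^sup>2)) - ln w)" by simp
      then show ?thesis by (simp add: algebra_simps)
    qed
    also have "\<dots> \<le> 2 * ln (jbr y / jbr y') + 0 + 1"
    proof -
      have "w * (2 * ln (jbr y / jbr y')) \<le> 2 * ln (jbr y / jbr y')" using w0 e5 by (simp add: mult_left_le_one_le)
      moreover have "w * ln (y\<^sup>2 / (1 + y\<^sup>2)) \<le> 0" using w0 e2 by (simp add: mult_nonneg_nonpos)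
      ultimately show ?thesis using e3 by linarith
    qed
    also have "\<dots> \<le> 2 * L' + 1" using e5 by simp
    finally show ?thesis .
  qed
  have "4 * (v * w) * L = 2 * v * (2 * w * L)" by simp
  also have "\<dots> \<le> 2 * v * (2 * L' + 1)" using key u01 by (intro mult_left_mono) auto
  finally have "4 * (v * w) * L \<le> 4 * v * L' + 2 * v" by (simp add: algebra_simps)
  then have "\<bar>Ifun y y'\<bar> \<le> 6 + 4 * v * L'" using part1 u01 by linarith
  also have "\<dots> \<le> 6 * (1 + v * L')" using u01 L'0 by (simp add: algebra_simps)
  finally show ?thesis unfolding v_eq[symmetric] L'_def by simp
qed

lemma one_plus_sq_ne: "1 + y\<^sup>2 \<noteq> (0::real)"
  by (smt (verit) zero_le_power2)

lemma Q_alg: "z \<noteq> 0 \<Longrightarrow> y \<noteq> 0 \<Longrightarrow> - (s * (2 * y)) / z\<^sup>2 = (- (2 * y\<^sup>2) / z) / y * (s / z)"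
  for z y s :: real
  by (simp add: field_simps power2_eq_square)

lemma Q_pos: "Q y > 0"
  unfolding Q_def by (simp add: add_pos_nonneg)

lemma Q_deriv:
  assumes "y > 0"
  shows "(Q has_real_derivative (A_theta y / y * Q y)) (at y)"
proof -
  have h: "1 + y\<^sup>2 \<noteq> 0" by (smt (verit) zero_le_power2)
  have "(Q has_real_derivative (- (sqrt 8 * (2 * y)) / (1 + y\<^sup>2)\<^sup>2)) (at y)"
    unfolding Q_def[abs_def] using h
    by (auto intro!: derivative_eq_intros simp: power2_eq_square)
  moreover have "- (sqrt 8 * (2 * y)) / (1 + y\<^sup>2)\<^sup>2 = A_theta y / y * Q y"
    unfolding A_theta_def Q_def using Q_alg[OF h, of y "sqrt 8"] assms by simp
  ultimately show ?thesis by simp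
qed

lemma Ifun_diag: "Ifun y y = 1"
  unfolding Ifun_def by (simp add: algebra_simps)

lemma DIf_diag: "DIf y y = 0"
  unfolding DIf_def by simp

lemma Ifun_cont: "continuous_on {a..b} (\<lambda>t. Ifun t y') " if "a > 0" for a b
  using that by (intro continuous_at_imp_continuous_on ballI DERIV_isCont[OF Ifun_deriv]) auto

lemma DIf_cont: "continuous_on {a..b} (\<lambda>t. DIf t y') " if "a > 0" for a b
  using that by (intro continuous_at_imp_continuous_on ballI DERIV_isCont[OF DIf_deriv]) auto

lemma Q_cont: "continuous_on S Q"
  unfolding Q_def[abs_def] by (intro continuous_intros) (simp add: one_plus_sq_ne)

lemma indic_pos_ind: "indic_pos (y - y') = indicator {y'<..} y"
  unfolding indic_pos_def by (simp add: indicator_def)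

lemma set_FTC:
  fixes g f F :: "real \<Rightarrow> real"
  assumes "c \<le> B"
    and eq: "\<And>y. indicator S y * g y = indicator {c<..B} y * f y"
    and cont: "continuous_on {c..B} f"
    and der: "\<And>y. c \<le> y \<Longrightarrow> y \<le> B \<Longrightarrow> (F has_real_derivative f y) (at y)"
  shows "(LINT y:S|lborel. g y) = F B - F c"
proof -
  have "(LINT y:S|lborel. g y) = (LINT y:{c<..B}|lborel. f y)"
    unfolding set_lebesgue_integral_def using eq by simp
  also have "\<dots> = (LBINT y=c..B. f y)"
    using interval_integral_Ioc[of c B f] assms(1) by simp
  also have "\<dots> = F B - F c"
  proof (rule interval_integral_FTC_finite)
    show "continuous_on {min c B..max c B} f" using cont assms(1) by simp
    fix x assume "min c B \<le> x" "x \<le> max c B"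
    then have "(F has_real_derivative f x) (at x)" using der assms(1) by simp
    then show "(F has_vector_derivative f x) (at x within {min c B..max c B})"
      by (simp add: has_real_derivative_iff_has_vector_derivative has_vector_derivative_at_within)
  qed
  finally show ?thesis .
qed

lemma test_props:
  assumes "test_function \<phi>"
  obtains a b where "0 < a" "a \<le> b" "\<And>y. y \<notin> {a..b} \<Longrightarrow> \<phi> y = 0"
    "\<And>x. (\<phi> has_real_derivative deriv \<phi> x) (at x)"
    "continuous_on UNIV (deriv \<phi>)"
    "\<And>y. y > b \<Longrightarrow> deriv \<phi> y = 0"
proof -
  from assms obtain a b where ab: "0 < a" "a \<le> b" "\<And>y. y \<notin> {a..b} \<Longrightarrow> \<phi> y = 0"
    unfolding test_function_def by blast
  have sm: "higher_diff_on 2 UNIV \<phi>" using assms unfolding test_function_def smooth_on_def by blast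
  have diff: "\<And>x. \<phi> differentiable (at x)" using sm by (simp add: numeral_2_eq_2)
  have D: "\<And>x. (\<phi> has_real_derivative deriv \<phi> x) (at x)"
    using diff DERIV_deriv_iff_real_differentiable by blast
  have fd: "frechet_derivative \<phi> (at x) 1 = deriv \<phi> x" for x
  proof -
    have "(\<phi> has_derivative (\<lambda>h. deriv \<phi> x * h)) (at x)"
      using D[of x] by (simp add: has_field_derivative_def)
    then have "frechet_derivative \<phi> (at x) = (\<lambda>h. deriv \<phi> x * h)" by (metis frechet_derivative_at)
    then show ?thesis by simp
  qed
  have h1: "higher_diff_on (Suc 0) UNIV (\<lambda>x. frechet_derivative \<phi> (at x) 1)"
    using sm by (simp add: numeral_2_eq_2)
  have "higher_diff_on 0 UNIV (\<lambda>x. frechet_derivative \<phi> (at x) 1)"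
    using hd_Suc_imp[OF h1] .
  then have "continuous_on UNIV (\<lambda>x. frechet_derivative \<phi> (at x) 1)" by simp
  then have cont: "continuous_on UNIV (deriv \<phi>)" using fd by simp
  have z: "deriv \<phi> y = 0" if "y > b" for y
  proof -
    have "eventually (\<lambda>t. \<phi> t = 0) (nhds y)"
      using eventually_nhds_in_open[of "{b<..}" y] that ab(3)
      by (auto elim!: eventually_mono)
    then have "deriv \<phi> y = deriv (\<lambda>_. 0) y" by (rule deriv_cong_ev) simp
    then show ?thesis by simp
  qed
  show ?thesis using that[OF ab D cont z] .
qed


lemma loc_int_ind:
  assumes "\<And>a b. 0 < a \<Longrightarrow> continuous_on {a..b} h"
  shows "loc_int (\<lambda>y. indic_pos (y - y') * h y)"
  unfolding loc_int_def
proof (intro allI impI)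
  fix a b :: real assume a: "0 < a"
  have "set_integrable lborel {a..b} h" using assms[OF a] by (rule borel_integrable_atLeastAtMost')
  then have "set_integrable lborel ({a..b} \<inter> {y'<..}) h"
    by (rule set_integrable_subset) auto
  moreover have "(\<lambda>y. indicator ({a..b} \<inter> {y'<..}) y *\<^sub>R h y) = (\<lambda>y. indicator {a..b} y *\<^sub>R (indic_pos (y - y') * h y))"
    by (auto simp: indicator_def indic_pos_def)
  ultimately show "set_integrable lborel {a..b} (\<lambda>y. indic_pos (y - y') * h y)"
    unfolding set_integrable_def by simp
qed

lemma iLQi_green: "outgoing_green iLQi_pair (\<lambda>y y'. indic_pos (y - y') * Q y / Q y')"
  unfolding outgoing_green_def
proof (intro allI impI)
  fix y' :: real assume y': "0 < y'"
  show "(\<forall>y. 0 < y \<and> y < y' \<longrightarrow> indic_pos (y - y') * Q y / Q y' = 0) \<and>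
    loc_int (\<lambda>y. indic_pos (y - y') * Q y / Q y') \<and>
    (\<forall>\<phi>. test_function \<phi> \<longrightarrow> iLQi_pair (\<lambda>y. indic_pos (y - y') * Q y / Q y') \<phi> = \<phi> y')"
  proof (intro conjI)
  show "\<forall>y. 0 < y \<and> y < y' \<longrightarrow> indic_pos (y - y') * Q y / Q y' = 0"
    by (simp add: indic_pos_def)
  have e: "(\<lambda>y. indic_pos (y - y') * Q y / Q y') = (\<lambda>y. indic_pos (y - y') * (Q y / Q y'))" by simp
  show "loc_int (\<lambda>y. indic_pos (y - y') * Q y / Q y')"
    unfolding e by (rule loc_int_ind) (auto intro!: continuous_intros Q_cont simp: less_imp_neq[OF Q_pos, symmetric])
  show "\<forall>\<phi>. test_function \<phi> \<longrightarrow> iLQi_pair (\<lambda>y. indic_pos (y - y') * Q y / Q y') \<phi> = \<phi> y'"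
  proof (intro allI impI)
    fix \<phi> :: "real \<Rightarrow> real"
    assume tf: "test_function \<phi>"
    obtain a b where ab: "0 < a" "a \<le> b" "\<And>y. y \<notin> {a..b} \<Longrightarrow> \<phi> y = 0"
      and D: "\<And>x. (\<phi> has_real_derivative deriv \<phi> x) (at x)"
      and cont: "continuous_on UNIV (deriv \<phi>)"
      and z: "\<And>y. y > b \<Longrightarrow> deriv \<phi> y = 0"
      using test_props[OF tf] by blast
    have phicont: "continuous_on UNIV \<phi>"
      by (intro continuous_at_imp_continuous_on ballI DERIV_isCont[OF D])
    define B where "B = max b y' + 1"
    have B: "y' \<le> B" "b < B" unfolding B_def by auto
    have Qy': "Q y' \<noteq> 0" using Q_pos[of y'] by simp
    define F where "F = (\<lambda>y. - (Q y * \<phi> y) / Q y')"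
    define f where "f = (\<lambda>y. - (A_theta y / y * Q y * \<phi> y + Q y * deriv \<phi> y) / Q y')"
    have "iLQi_pair (\<lambda>y. indic_pos (y - y') * Q y / Q y') \<phi> = F B - F y'"
      unfolding iLQi_pair_def
    proof (rule set_FTC[OF B(1)])
      fix y :: real
      show "indicator {0<..} y * (indic_pos (y - y') * Q y / Q y' * - deriv \<phi> y - A_theta y / y * (indic_pos (y - y') * Q y / Q y') * \<phi> y)
          = indicator {y'<..B} y * f y"
      proof (cases "y \<le> y'")
        case True then show ?thesis using y' by (simp add: indic_pos_def indicator_def)
      next
        case False
        show ?thesis
        proof (cases "y \<le> B")
          case True
          then show ?thesis using False y' Qy' unfolding f_def
            by (simp add: indic_pos_def indicator_def field_simps)
        next
          case False
          then have "\<phi> y = 0" "deriv \<phi> y = 0" using ab(3) z B by auto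
          then show ?thesis using False by (simp add: indicator_def)
        qed
      qed
    next
      show "continuous_on {y'..B} f" unfolding f_def A_theta_def using y' Qy'
        by (intro continuous_intros Q_cont continuous_on_subset[OF cont] continuous_on_subset[OF phicont]) (auto simp: one_plus_sq_ne)
    next
      fix y assume y: "y' \<le> y" "y \<le> B"
      then have y0: "y > 0" using y' by simp
      have "((\<lambda>x. - (Q x * \<phi> x) / Q y') has_real_derivative - ((A_theta y / y * Q y) * \<phi> y + deriv \<phi> y * Q y) / Q y') (at y)"
        by (rule DERIV_cdivide[OF Deriv.field_differentiable_minus[OF DERIV_mult[OF Q_deriv[OF y0] D[of y]]]])
      then show "(F has_real_derivative f y) (at y)"
        unfolding F_def f_def by (rule DERIV_cong) (simp add: algebra_simps)
    qed
    also have "\<dots> = \<phi> y'"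
      using ab(3)[of B] B Qy' unfolding F_def by auto
    finally show "iLQi_pair (\<lambda>y. indic_pos (y - y') * Q y / Q y') \<phi> = \<phi> y'" .
  qed
  qed
qed


lemma Q_sq:
  assumes "s > 0"
  shows "Q s * Q s * s = 8 * (uu s * (1 - uu s)) / s"
proof -
  define z where "z = (1 + s\<^sup>2)\<^sup>2"
  have z0: "z \<noteq> 0" unfolding z_def using one_plus_sq_ne by simp
  have "Q s * Q s = 8 / z" unfolding Q_def z_def by (simp add: power2_eq_square)
  moreover have "uu s * (1 - uu s) = s\<^sup>2 / z" unfolding z_def by (rule uu_expr2)
  moreover have "8 * (s\<^sup>2 / z) / s = 8 / z * s" using assms by (simp add: power2_eq_square)
  ultimately show ?thesis by simp
qed

lemma N_val:
  assumes y': "0 < y'" and y: "0 < y"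
  shows "(LINT s:{0<..y}|lborel. Q s * (indic_pos (s - y') * Q s / Q y' * Ifun s y') * s)
       = (if y' < y then - DIf y y' / Q y' else 0)"
proof (cases "y' < y")
  case True
  have Qy': "Q y' \<noteq> 0" using Q_pos[of y'] by simp
  define F where "F = (\<lambda>s. - (DIf s y' / Q y'))"
  define f where "f = (\<lambda>s. Q s * (Q s / Q y' * Ifun s y') * s)"
  have "(LINT s:{0<..y}|lborel. Q s * (indic_pos (s - y') * Q s / Q y' * Ifun s y') * s) = F y - F y'"
  proof (rule set_FTC[where F=F and f=f and c=y' and B=y])
    show "y' \<le> y" using True by simp
    fix s :: real
    show "indicator {0<..y} s * (Q s * (indic_pos (s - y') * Q s / Q y' * Ifun s y') * s) = indicator {y'<..y} s * f s"
      unfolding f_def using y' by (auto simp: indicator_def indic_pos_def)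
  next
    show "continuous_on {y'..y} f" unfolding f_def using y' Qy'
      by (intro continuous_intros Q_cont Ifun_cont) auto
  next
    fix s assume s: "y' \<le> s" "s \<le> y"
    then have s0: "s > 0" using y' by simp
    have "((\<lambda>s. DIf s y' / Q y') has_real_derivative (-8 * (uu s * (1 - uu s)) * Ifun s y' / s) / Q y') (at s)"
      by (rule DERIV_cdivide[OF DIf_deriv[OF s0]])
    then have "(F has_real_derivative - ((-8 * (uu s * (1 - uu s)) * Ifun s y' / s) / Q y')) (at s)"
      unfolding F_def by (rule Deriv.field_differentiable_minus)
    moreover have "- ((-8 * (uu s * (1 - uu s)) * Ifun s y' / s) / Q y') = f s"
      unfolding f_def using Q_sq[OF s0] s0 Qy' by (simp add: field_simps) algebra
    ultimately show "(F has_real_derivative f s) (at s)" by simp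
  qed
  also have "\<dots> = - DIf y y' / Q y'" unfolding F_def by (simp add: DIf_diag)
  finally show ?thesis using True by simp
next
  case False
  have "(\<lambda>s. indicator {0<..y} s *\<^sub>R (Q s * (indic_pos (s - y') * Q s / Q y' * Ifun s y') * s)) = (\<lambda>s. 0)"
    using False by (auto simp: indicator_def indic_pos_def)
  then show ?thesis using False unfolding set_lebesgue_integral_def by simp
qed


lemma LQ_green: "outgoing_green LQ_pair (\<lambda>y y'. indic_pos (y - y') * Q y / Q y' * Ifun y y')"
  unfolding outgoing_green_def
proof (intro allI impI)
  fix y' :: real assume y': "0 < y'"
  have Qy': "Q y' \<noteq> 0" using Q_pos[of y'] by simp
  show "(\<forall>y. 0 < y \<and> y < y' \<longrightarrow> indic_pos (y - y') * Q y / Q y' * Ifun y y' = 0) \<and>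
    loc_int (\<lambda>y. indic_pos (y - y') * Q y / Q y' * Ifun y y') \<and>
    (\<forall>\<phi>. test_function \<phi> \<longrightarrow> LQ_pair (\<lambda>y. indic_pos (y - y') * Q y / Q y' * Ifun y y') \<phi> = \<phi> y')"
  proof (intro conjI)
  show "\<forall>y. 0 < y \<and> y < y' \<longrightarrow> indic_pos (y - y') * Q y / Q y' * Ifun y y' = 0"
    by (simp add: indic_pos_def)
  have e: "(\<lambda>y. indic_pos (y - y') * Q y / Q y' * Ifun y y') = (\<lambda>y. indic_pos (y - y') * (Q y / Q y' * Ifun y y'))" by (simp add: mult.assoc)
  show "loc_int (\<lambda>y. indic_pos (y - y') * Q y / Q y' * Ifun y y')"
    unfolding e by (rule loc_int_ind) (auto intro!: continuous_intros Q_cont Ifun_cont simp: Qy')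
  show "\<forall>\<phi>. test_function \<phi> \<longrightarrow> LQ_pair (\<lambda>y. indic_pos (y - y') * Q y / Q y' * Ifun y y') \<phi> = \<phi> y'"
  proof (intro allI impI)
    fix \<phi> :: "real \<Rightarrow> real"
    assume tf: "test_function \<phi>"
    obtain a b where ab: "0 < a" "a \<le> b" "\<And>y. y \<notin> {a..b} \<Longrightarrow> \<phi> y = 0"
      and D: "\<And>x. (\<phi> has_real_derivative deriv \<phi> x) (at x)"
      and cont: "continuous_on UNIV (deriv \<phi>)"
      and z: "\<And>y. y > b \<Longrightarrow> deriv \<phi> y = 0"
      using test_props[OF tf] by blast
    have phicont: "continuous_on UNIV \<phi>"
      by (intro continuous_at_imp_continuous_on ballI DERIV_isCont[OF D])
    define B where "B = max b y' + 1"
    have B: "y' \<le> B" "b < B" unfolding B_def by auto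
    define F where "F = (\<lambda>y. - (Q y * Ifun y y' * \<phi> y / Q y'))"
    define f where "f = (\<lambda>y. - (((A_theta y / y * Q y * Ifun y y' + DIf y y' / y * Q y) * \<phi> y + deriv \<phi> y * (Q y * Ifun y y')) / Q y'))"
    have "LQ_pair (\<lambda>y. indic_pos (y - y') * Q y / Q y' * Ifun y y') \<phi> = F B - F y'"
      unfolding LQ_pair_def
    proof (rule set_FTC[where F=F and f=f and c=y' and B=B])
      show "y' \<le> B" using B by simp
      fix y :: real
      show "indicator {0<..} y * ((indic_pos (y - y') * Q y / Q y' * Ifun y y') * - deriv \<phi> y
          - A_theta y / y * (indic_pos (y - y') * Q y / Q y' * Ifun y y') * \<phi> y
          + Q y / y * \<phi> y * (LINT s:{0<..y}|lborel. Q s * (indic_pos (s - y') * Q s / Q y' * Ifun s y') * s))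
          = indicator {y'<..B} y * f y"
      proof (cases "y \<le> 0")
        case True then show ?thesis using y' by (simp add: indicator_def)
      next
        case False
        then have y0: "y > 0" by simp
        note N = N_val[OF y' y0]
        show ?thesis
        proof (cases "y \<le> y'")
          case True then show ?thesis using y0 N by (simp add: indic_pos_def indicator_def)
        next
          case False
          show ?thesis
          proof (cases "y \<le> B")
            case True
            then show ?thesis using False y0 N Qy' unfolding f_def
              by (simp add: indic_pos_def indicator_def field_simps)
          next
            case False
            then have "\<phi> y = 0" "deriv \<phi> y = 0" using ab(3) z B by auto
            then show ?thesis using False y0 by (simp add: indicator_def)
          qed
        qed
      qed
    next
      show "continuous_on {y'..B} f" unfolding f_def A_theta_def using y' Qy'
        by (intro continuous_intros Q_cont Ifun_cont DIf_cont continuous_on_subset[OF cont] continuous_on_subset[OF phicont])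
           (auto simp: one_plus_sq_ne)
    next
      fix y assume y: "y' \<le> y" "y \<le> B"
      then have y0: "y > 0" using y' by simp
      show "(F has_real_derivative f y) (at y)"
        unfolding F_def f_def
        by (rule Deriv.field_differentiable_minus[OF DERIV_cdivide[OF DERIV_mult[OF DERIV_mult[OF Q_deriv[OF y0] Ifun_deriv[OF y0]] D[of y]]]])
    qed
    also have "\<dots> = \<phi> y'"
      using ab(3)[of B] B Qy' unfolding F_def by (auto simp: Ifun_diag)
    finally show "LQ_pair (\<lambda>y. indic_pos (y - y') * Q y / Q y' * Ifun y y') \<phi> = \<phi> y'" .
  qed
  qed
qed

lemma hd_diff:
  fixes f g :: "'a::real_normed_vector \<Rightarrow> real"
  assumes "open S" "higher_diff_on n S f" "higher_diff_on n S g"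
  shows "higher_diff_on n S (\<lambda>x. f x - g x)"
proof -
  have "higher_diff_on n S (\<lambda>x. f x + (-1) * g x)"
    using assms by (intro hd_add hd_mult hd_const) auto
  then show ?thesis by simp
qed

lemma hd_uu:
  fixes f :: "'a::real_normed_vector \<Rightarrow> real"
  assumes "open S" "higher_diff_on n S f"
  shows "higher_diff_on n S (\<lambda>x. uu (f x))"
proof -
  have "higher_diff_on n S (\<lambda>x. inverse (1 + f x * f x))"
  proof (rule hd_inverse[OF assms(1)])
    show "higher_diff_on n S (\<lambda>x. 1 + f x * f x)"
      by (intro hd_add[OF assms(1)] hd_mult[OF assms(1)] hd_const assms(2))
    show "\<forall>x\<in>S. 1 + f x * f x \<noteq> 0"
    proof
      fix x have "0 \<le> f x * f x" by simp
      then show "1 + f x * f x \<noteq> 0" by linarith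
    qed
  qed
  moreover have "(\<lambda>x. inverse (1 + f x * f x)) = (\<lambda>x. uu (f x))"
    unfolding uu_def by (simp add: power2_eq_square divide_inverse)
  ultimately show ?thesis by simp
qed

lemma smooth_Ifun: "smooth_on {p :: real \<times> real. 0 < snd p \<and> snd p < fst p} (\<lambda>p. Ifun (fst p) (snd p))"
  unfolding smooth_on_def
proof
  fix n
  define S where "S = {p :: real \<times> real. 0 < snd p \<and> snd p < fst p}"
  have oS: "open S" unfolding S_def
    by (intro open_Collect_conj open_Collect_less continuous_intros)
  have fst: "higher_diff_on n S fst" by (rule hd_linear) (rule bounded_linear_fst)
  have snd: "higher_diff_on n S snd" by (rule hd_linear) (rule bounded_linear_snd)
  have pos: "\<forall>x\<in>S. 0 < fst x" "\<forall>x\<in>S. 0 < snd x" unfolding S_def by auto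
  have u1: "higher_diff_on n S (\<lambda>p. uu (fst p))" by (rule hd_uu[OF oS fst])
  have u2: "higher_diff_on n S (\<lambda>p. uu (snd p))" by (rule hd_uu[OF oS snd])
  have l1: "higher_diff_on n S (\<lambda>p. ln (fst p))" using hd_ln[OF oS fst] pos by auto
  have l2: "higher_diff_on n S (\<lambda>p. ln (snd p))" using hd_ln[OF oS snd] pos by auto
  show "higher_diff_on n S (\<lambda>p. Ifun (fst p) (snd p))"
    unfolding Ifun_def
    by (intro hd_add[OF oS] hd_diff[OF oS] hd_mult[OF oS] hd_const u1 u2 l1 l2)
qed

lemma a_le: "uu y * (1 - uu y) \<le> y\<^sup>2 / (1 + y ^ 4)"
proof -
  have "uu y * (1 - uu y) = y\<^sup>2 / (1 + y\<^sup>2)\<^sup>2" by (rule uu_expr2)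
  also have "\<dots> \<le> y\<^sup>2 / (1 + y ^ 4)"
  proof (rule divide_left_mono)
    show "1 + y ^ 4 \<le> (1 + y\<^sup>2)\<^sup>2" by (simp add: power2_eq_square algebra_simps power4_eq_xxxx)
    show "0 < (1 + y\<^sup>2)\<^sup>2 * (1 + y ^ 4)" by (simp add: add_pos_nonneg one_plus_sq_ne)
  qed simp
  finally show ?thesis .
qed

lemma uu01: "0 \<le> uu y" "uu y \<le> 1"
  using uu_pos[of y] uu_le1[of y] by auto

lemma DIf_bound8:
  assumes "0 < y'" "y' < y"
  shows "\<bar>DIf y y'\<bar> \<le> 8"
proof -
  have "\<bar>DIf y y'\<bar> \<le> 8 * ((y - y') / y) * min (y\<^sup>2 / (1 + y\<^sup>2)) (1 / (1 + y'\<^sup>2))"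
    by (rule DIf_bound[OF assms])
  also have "\<dots> \<le> 8 * 1 * 1"
  proof (intro mult_mono)
    show "(y - y') / y \<le> 1" using assms by simp
    have "1 / (1 + y'\<^sup>2) \<le> 1" by (subst divide_le_eq_1_pos) (auto simp: add_pos_nonneg)
    then show "min (y\<^sup>2 / (1 + y\<^sup>2)) (1 / (1 + y'\<^sup>2)) \<le> 1" by (rule min.coboundedI2)
  qed (use assms in auto)
  finally show ?thesis by simp
qed

lemma DIf_small:
  assumes "0 < y'" "y' < y"
  shows "\<bar>DIf y y'\<bar> \<le> 8 * (y - y') * (y / (1 + y\<^sup>2))"
proof -
  have "\<bar>DIf y y'\<bar> \<le> 8 * ((y - y') / y) * min (y\<^sup>2 / (1 + y\<^sup>2)) (1 / (1 + y'\<^sup>2))"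
    by (rule DIf_bound[OF assms])
  also have "\<dots> \<le> 8 * ((y - y') / y) * (y\<^sup>2 / (1 + y\<^sup>2))"
    using assms by (intro mult_left_mono) auto
  also have "\<dots> = 8 * (y - y') * (y / (1 + y\<^sup>2))" using assms by (simp add: power2_eq_square)
  finally show ?thesis .
qed

lemma y_frac_le: "y / (1 + y\<^sup>2) \<le> (1::real)"
proof -
  have "0 \<le> (y - 1)\<^sup>2" by simp
  then have a: "2 * y \<le> 1 + y * y" by (simp add: power2_eq_square algebra_simps)
  have b: "0 \<le> y * y" by simp
  from a b have "y \<le> 1 + y * y" by linarith
  then have "y \<le> 1 + y\<^sup>2" by (simp add: power2_eq_square)
  then show ?thesis by (subst divide_le_eq_1_pos) (auto simp: add_pos_nonneg)
qed


lemma Ifun_near: "\<forall>\<epsilon>>0. \<exists>\<delta>>0. \<forall>y y'. 0 < y' \<and> y' < y \<and> y - y' < \<delta> \<longrightarrow> \<bar>Ifun y y' - 1\<bar> < \<epsilon>"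
proof (intro allI impI)
  fix \<epsilon> :: real assume e: "\<epsilon> > 0"
  show "\<exists>\<delta>>0. \<forall>y y'. 0 < y' \<and> y' < y \<and> y - y' < \<delta> \<longrightarrow> \<bar>Ifun y y' - 1\<bar> < \<epsilon>"
  proof (intro exI[of _ "min 1 (\<epsilon> / 8)"] conjI allI impI)
    show "0 < min 1 (\<epsilon> / 8)" using e by simp
    fix y y' :: real assume h: "0 < y' \<and> y' < y \<and> y - y' < min 1 (\<epsilon> / 8)"
    then have y': "0 < y'" "y' < y" and d1: "y - y' < 1" and d2: "y - y' < \<epsilon> / 8" by auto
    obtain z where z: "y' < z" "z < y" and mv: "Ifun y y' - Ifun y' y' = (y - y') * (DIf z y' / z)"
      using MVT2[of y' y "\<lambda>t. Ifun t y'" "\<lambda>t. DIf t y' / t"] y' Ifun_deriv by force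
    have z0: "z > 0" using z y' by simp
    have "\<bar>DIf z y'\<bar> \<le> 8 * (z - y') * (z / (1 + z\<^sup>2))" by (rule DIf_small) (use y' z in auto)
    also have "\<dots> \<le> 8 * (y - y') * z"
    proof (rule mult_mono)
      show "8 * (z - y') \<le> 8 * (y - y')" using z by simp
      show "z / (1 + z\<^sup>2) \<le> z" using z0 by (simp add: divide_le_eq add_pos_nonneg)
    qed (use z y' in auto)
    finally have "\<bar>DIf z y'\<bar> / z \<le> 8 * (y - y')" using z0 by (simp add: divide_le_eq)
    then have b: "\<bar>DIf z y' / z\<bar> \<le> 8 * (y - y')" using z0 by simp
    have "\<bar>Ifun y y' - 1\<bar> = (y - y') * \<bar>DIf z y' / z\<bar>" using mv y' by (simp add: Ifun_diag abs_mult)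
    also have "\<dots> \<le> (y - y') * (8 * (y - y'))" using b y' by (intro mult_left_mono) auto
    also have "\<dots> < 1 * (8 * (\<epsilon> / 8))"
      using d1 d2 y' by (rule_tac mult_strict_mono) auto
    finally show "\<bar>Ifun y y' - 1\<bar> < \<epsilon>" by simp
  qed
qed

lemma DIf_near: "\<forall>\<epsilon>>0. \<exists>\<delta>>0. \<forall>y y'. 0 < y' \<and> y' < y \<and> y - y' < \<delta> \<longrightarrow> \<bar>ydy Ifun y y'\<bar> < \<epsilon>"
proof (intro allI impI)
  fix \<epsilon> :: real assume e: "\<epsilon> > 0"
  show "\<exists>\<delta>>0. \<forall>y y'. 0 < y' \<and> y' < y \<and> y - y' < \<delta> \<longrightarrow> \<bar>ydy Ifun y y'\<bar> < \<epsilon>"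
  proof (intro exI[of _ "\<epsilon> / 8"] conjI allI impI)
    show "0 < \<epsilon> / 8" using e by simp
    fix y y' :: real assume h: "0 < y' \<and> y' < y \<and> y - y' < \<epsilon> / 8"
    then have y': "0 < y'" "y' < y" and d: "y - y' < \<epsilon> / 8" by auto
    have "\<bar>ydy Ifun y y'\<bar> = \<bar>DIf y y'\<bar>" using y' by (simp add: ydy_Ifun)
    also have "\<dots> \<le> 8 * (y - y') * (y / (1 + y\<^sup>2))" by (rule DIf_small[OF y'])
    also have "\<dots> \<le> 8 * (y - y') * 1" using y' y_frac_le[of y] by (intro mult_left_mono) auto
    also have "\<dots> < \<epsilon>" using d by simp
    finally show "\<bar>ydy Ifun y y'\<bar> < \<epsilon>" .
  qed
qed

lemma W_ge1: "1 \<le> 1 + 1 / (jbr y')\<^sup>2 * ln (2 + jbr y / jbr y')"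
proof -
  have "0 \<le> jbr y / jbr y'" using jbr_pos[of y] jbr_pos[of y'] by simp
  then have "0 \<le> ln (2 + jbr y / jbr y')" by simp
  then show ?thesis by simp
qed

lemma high_bound:
  assumes k: "k \<ge> 2"
  shows "\<exists>C. \<forall>y y'. 0 < y' \<and> y' < y \<longrightarrow>
        \<bar>(ydy ^^ k) Ifun y y'\<bar> \<le> C * (y\<^sup>2 / (1 + y ^ 4)) * (1 + 1 / (jbr y')\<^sup>2 * ln (2 + jbr y / jbr y'))"
proof -
  define P where "P = fst (PRk k)"
  define R where "R = snd (PRk k)"
  have dP: "Aq dvd P" and dR: "Aq dvd R" using PRk_dvd[OF k] unfolding P_def R_def by auto
  define cP where "cP = pbound (P div Aq)"
  define cR where "cR = pbound (R div Aq)"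
  have c0: "0 \<le> cP" "0 \<le> cR" unfolding cP_def cR_def by (simp_all add: pbound_nonneg)
  show ?thesis
  proof (intro exI[of _ "6 * cP + 8 * cR"] allI impI)
    fix y y' :: real assume h: "0 < y' \<and> y' < y"
    then have y': "0 < y'" "y' < y" by auto
    have y0: "y > 0" using y' by simp
    define a where "a = uu y * (1 - uu y)"
    define W where "W = 1 + 1 / (jbr y')\<^sup>2 * ln (2 + jbr y / jbr y')"
    have a0: "0 \<le> a" unfolding a_def using uu01[of y] by simp
    have W1: "1 \<le> W" unfolding W_def by (rule W_ge1)
    have pP: "\<bar>poly P (uu y)\<bar> \<le> cP * a" unfolding cP_def a_def by (rule Aq_dvd_bound[OF dP uu01])
    have pR: "\<bar>poly R (uu y)\<bar> \<le> cR * a" unfolding cR_def a_def by (rule Aq_dvd_bound[OF dR uu01])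
    have bI: "\<bar>Ifun y y'\<bar> \<le> 6 * W" unfolding W_def by (rule Ifun_bound[OF y'])
    have bD: "\<bar>DIf y y'\<bar> \<le> 8" by (rule DIf_bound8[OF y'])
    have "\<bar>(ydy ^^ k) Ifun y y'\<bar> = \<bar>poly P (uu y) * Ifun y y' + poly R (uu y) * DIf y y'\<bar>"
      using ydy_pow[OF y0] unfolding Fk_def P_def R_def by simp
    also have "\<dots> \<le> \<bar>poly P (uu y)\<bar> * \<bar>Ifun y y'\<bar> + \<bar>poly R (uu y)\<bar> * \<bar>DIf y y'\<bar>"
      by (metis abs_mult abs_triangle_ineq)
    also have "\<dots> \<le> (cP * a) * (6 * W) + (cR * a) * 8"
      using pP pR bI bD c0 a0 by (intro add_mono mult_mono) auto
    also have "\<dots> \<le> (cP * a) * (6 * W) + (cR * a) * (8 * W)"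
      using W1 c0 a0 by (intro add_mono mult_left_mono) auto
    also have "\<dots> = (6 * cP + 8 * cR) * a * W" by (simp add: algebra_simps)
    also have "\<dots> \<le> (6 * cP + 8 * cR) * (y\<^sup>2 / (1 + y ^ 4)) * W"
      using a_le[of y] c0 W1 unfolding a_def by (intro mult_right_mono mult_left_mono) auto
    finally show "\<bar>(ydy ^^ k) Ifun y y'\<bar> \<le> (6 * cP + 8 * cR) * (y\<^sup>2 / (1 + y ^ 4)) * (1 + 1 / (jbr y')\<^sup>2 * ln (2 + jbr y / jbr y'))"
      unfolding W_def .
  qed
qed

lemma diag_lim:
  assumes y: "y > 0"
  shows "((\<lambda>y'. (ydy ^^ k) Ifun y y') \<longlongrightarrow> poly (fst (PRk k)) (uu y)) (at_left y)"
proof -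
  have e: "(\<lambda>y'. (ydy ^^ k) Ifun y y') = (\<lambda>y'. Fk (PRk k) y y')" using ydy_pow[OF y] by auto
  have c: "isCont (\<lambda>t. Fk (PRk k) y t) y"
    unfolding Fk_def Ifun_def DIf_def uu_def using y
    by (intro continuous_intros) (auto simp: one_plus_sq_ne)
  have "Fk (PRk k) y y = poly (fst (PRk k)) (uu y)" unfolding Fk_def by (simp add: Ifun_diag DIf_diag)
  with c have "((\<lambda>t. Fk (PRk k) y t) \<longlongrightarrow> poly (fst (PRk k)) (uu y)) (at y)"
    by (simp add: isCont_def)
  then show ?thesis unfolding e by (rule tendsto_mono[OF at_le[OF subset_UNIV]])
qed

lemma I_diag_eq:
  assumes "y > 0"
  shows "I_diag Ifun k y = poly (fst (PRk k)) (uu y)"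
  unfolding I_diag_def by (rule tendsto_Lim[OF trivial_limit_at_left_real diag_lim[OF assms]])

lemma diag_props:
  assumes k: "k \<ge> 2"
  shows "(\<forall>y>0. ((\<lambda>y'. (ydy ^^ k) Ifun y y') \<longlongrightarrow> I_diag Ifun k y) (at_left y))
      \<and> (\<forall>j y. 0 < y \<longrightarrow> (deriv ^^ j) (I_diag Ifun k) differentiable (at y))
      \<and> (\<forall>l. \<exists>C. \<forall>y>0. seminorm_l l (I_diag Ifun k) y \<le> C * (y\<^sup>2 / (1 + y ^ 4)))"
proof (intro conjI allI impI)
  fix y :: real assume "y > 0"
  then show "((\<lambda>y'. (ydy ^^ k) Ifun y y') \<longlongrightarrow> I_diag Ifun k y) (at_left y)"
    using diag_lim I_diag_eq by simp
next
  fix j and y :: real assume "0 < y"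
  then show "(deriv ^^ j) (I_diag Ifun k) differentiable (at y)"
    using deriv_pow_poly_differentiable[of "I_diag Ifun k" "fst (PRk k)" y j] I_diag_eq by blast
next
  fix l
  define S where "S = fst (PRk k)"
  have dS: "Aq dvd S" using PRk_dvd[OF k] unfolding S_def by auto
  define C where "C = (\<Sum>j\<le>l. pbound (Sd S j div Aq))"
  show "\<exists>C. \<forall>y>0. seminorm_l l (I_diag Ifun k) y \<le> C * (y\<^sup>2 / (1 + y ^ 4))"
  proof (intro exI[of _ C] allI impI)
    fix y :: real assume y: "y > 0"
    have fe: "\<And>t. t > 0 \<Longrightarrow> I_diag Ifun k t = poly S (uu t)" unfolding S_def by (rule I_diag_eq)
    have el: "\<bar>y ^ j * (deriv ^^ j) (I_diag Ifun k) y\<bar> \<le> C * (y\<^sup>2 / (1 + y ^ 4))" if j: "j \<in> {0..l}" for j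
    proof -
      have "y ^ j * (deriv ^^ j) (I_diag Ifun k) y = poly (Sd S j) (uu y)"
        using deriv_pow_poly[OF fe y, of j] y by simp
      then have "\<bar>y ^ j * (deriv ^^ j) (I_diag Ifun k) y\<bar> \<le> pbound (Sd S j div Aq) * (uu y * (1 - uu y))"
        using Aq_dvd_bound[OF Sd_dvd[OF dS] uu01] by simp
      also have "\<dots> \<le> C * (uu y * (1 - uu y))"
      proof (rule mult_right_mono)
        show "pbound (Sd S j div Aq) \<le> C" unfolding C_def
          using j by (intro member_le_sum) (auto simp: pbound_nonneg)
        show "0 \<le> uu y * (1 - uu y)" using uu01[of y] by simp
      qed
      also have "\<dots> \<le> C * (y\<^sup>2 / (1 + y ^ 4))"
        using a_le[of y] by (intro mult_left_mono) (auto simp: C_def pbound_nonneg intro!: sum_nonneg)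
      finally show ?thesis .
    qed
    show "seminorm_l l (I_diag Ifun k) y \<le> C * (y\<^sup>2 / (1 + y ^ 4))"
      unfolding seminorm_l_def using el by (subst Max_le_iff) auto
  qed
qed

theorem proposition3p4:
  shows "\<exists>I :: real \<Rightarrow> real \<Rightarrow> real.
    smooth_on {p :: real \<times> real. 0 < snd p \<and> snd p < fst p} (\<lambda>p. I (fst p) (snd p))
  \<and> outgoing_green LQ_pair (\<lambda>y y'. indic_pos (y - y') * Q y / Q y' * I y y')
  \<and> outgoing_green iLQi_pair (\<lambda>y y'. indic_pos (y - y') * Q y / Q y')
  \<and> (\<exists>C. \<forall>y y'. 0 < y' \<and> y' < y \<longrightarrow>
        \<bar>I y y'\<bar> \<le> C * (1 + 1 / (jbr y')\<^sup>2 * ln (2 + jbr y / jbr y')))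
  \<and> (\<exists>C. \<forall>y y'. 0 < y' \<and> y' < y \<longrightarrow>
        \<bar>ydy I y y'\<bar> \<le> C * ((y - y') / y) * min (y\<^sup>2 / (jbr y)\<^sup>2) (1 / (jbr y')\<^sup>2))
  \<and> (\<forall>k::nat. k \<ge> 2 \<longrightarrow> (\<exists>C. \<forall>y y'. 0 < y' \<and> y' < y \<longrightarrow>
        \<bar>(ydy ^^ k) I y y'\<bar> \<le> C * (y\<^sup>2 / (1 + y ^ 4)) * (1 + 1 / (jbr y')\<^sup>2 * ln (2 + jbr y / jbr y'))))
  \<and> (\<forall>\<epsilon>>0. \<exists>\<delta>>0. \<forall>y y'. 0 < y' \<and> y' < y \<and> y - y' < \<delta> \<longrightarrow> \<bar>I y y' - 1\<bar> < \<epsilon>)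
  \<and> (\<forall>\<epsilon>>0. \<exists>\<delta>>0. \<forall>y y'. 0 < y' \<and> y' < y \<and> y - y' < \<delta> \<longrightarrow> \<bar>ydy I y y'\<bar> < \<epsilon>)
  \<and> (\<forall>k::nat. k \<ge> 2 \<longrightarrow>
        (\<forall>y>0. ((\<lambda>y'. (ydy ^^ k) I y y') \<longlongrightarrow> I_diag I k y) (at_left y))
      \<and> (\<forall>j y. 0 < y \<longrightarrow> (deriv ^^ j) (I_diag I k) differentiable (at y))
      \<and> (\<forall>l. \<exists>C. \<forall>y>0. seminorm_l l (I_diag I k) y \<le> C * (y\<^sup>2 / (1 + y ^ 4))))"
proof (rule exI[of _ Ifun], intro conjI)
  show "smooth_on {p :: real \<times> real. 0 < snd p \<and> snd p < fst p} (\<lambda>p. Ifun (fst p) (snd p))"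
    by (rule smooth_Ifun)
  show "outgoing_green LQ_pair (\<lambda>y y'. indic_pos (y - y') * Q y / Q y' * Ifun y y')"
    by (rule LQ_green)
  show "outgoing_green iLQi_pair (\<lambda>y y'. indic_pos (y - y') * Q y / Q y')"
    by (rule iLQi_green)
  show "\<exists>C. \<forall>y y'. 0 < y' \<and> y' < y \<longrightarrow>
        \<bar>Ifun y y'\<bar> \<le> C * (1 + 1 / (jbr y')\<^sup>2 * ln (2 + jbr y / jbr y'))"
    using Ifun_bound by blast
  show "\<exists>C. \<forall>y y'. 0 < y' \<and> y' < y \<longrightarrow>
        \<bar>ydy Ifun y y'\<bar> \<le> C * ((y - y') / y) * min (y\<^sup>2 / (jbr y)\<^sup>2) (1 / (jbr y')\<^sup>2)"
  proof (intro exI[of _ 8] allI impI)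
    fix y y' :: real assume h: "0 < y' \<and> y' < y"
    then show "\<bar>ydy Ifun y y'\<bar> \<le> 8 * ((y - y') / y) * min (y\<^sup>2 / (jbr y)\<^sup>2) (1 / (jbr y')\<^sup>2)"
      using DIf_bound[of y' y] ydy_Ifun[of y y'] unfolding jbr_sq by simp
  qed
  show "\<forall>k::nat. k \<ge> 2 \<longrightarrow> (\<exists>C. \<forall>y y'. 0 < y' \<and> y' < y \<longrightarrow>
        \<bar>(ydy ^^ k) Ifun y y'\<bar> \<le> C * (y\<^sup>2 / (1 + y ^ 4)) * (1 + 1 / (jbr y')\<^sup>2 * ln (2 + jbr y / jbr y')))"
    using high_bound by blast
  show "\<forall>\<epsilon>>0. \<exists>\<delta>>0. \<forall>y y'. 0 < y' \<and> y' < y \<and> y - y' < \<delta> \<longrightarrow> \<bar>Ifun y y' - 1\<bar> < \<epsilon>"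
    by (rule Ifun_near)
  show "\<forall>\<epsilon>>0. \<exists>\<delta>>0. \<forall>y y'. 0 < y' \<and> y' < y \<and> y - y' < \<delta> \<longrightarrow> \<bar>ydy Ifun y y'\<bar> < \<epsilon>"
    by (rule DIf_near)
  show "\<forall>k::nat. k \<ge> 2 \<longrightarrow>
        (\<forall>y>0. ((\<lambda>y'. (ydy ^^ k) Ifun y y') \<longlongrightarrow> I_diag Ifun k y) (at_left y))
      \<and> (\<forall>j y. 0 < y \<longrightarrow> (deriv ^^ j) (I_diag Ifun k) differentiable (at y))
      \<and> (\<forall>l. \<exists>C. \<forall>y>0. seminorm_l l (I_diag Ifun k) y \<le> C * (y\<^sup>2 / (1 + y ^ 4)))"
    using diag_props by blast
qed

end
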